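(* For every $\alpha<\omega_1$: (1) $\langle A_\alpha,\tau_\alpha\rangle$ is a Baire space; (2) if $\alpha>0$ then $\tau_\alpha$ has no isolated points; (3) every subset of $A_\alpha$ that is Borel in the standard topology of $\mathbf{Tr}$ is Borel with respect to $\tau_\alpha$.
   Context: $\mathbf{Tr}$ is the set of all subtrees of $\omega^{<\omega}$ (subsets closed under initial segments), a closed subspace of $2^{(\omega^{<\omega})}$ with the product topology. $\mathbf{Trw}\subseteq\mathbf{Tr}$ is the set of well-founded trees (no infinite branch). For $T\in\mathbf{Trw}$, $h_T:T\to\omega_1$ is the canonical rank function: $h_T(\nu)=\sup\{h_T(\nu')+1:\nu'\in T \text{ an immediate successor of }\nu\}$ (so terminal nodes get rank 0). For $\alpha<\omega_1$, $A_\alpha=\{T\in\mathbf{Trw}: h_T(\langle\rangle)=\alpha\}$. For $n\in\omega$ let $n^{\le n}$ be the set of sequences of length $\le n$ with values $<n$. $\tau_\alpha$ is the topology on $A_\alpha$ with basis the sets $U(n,T)=\{T'\in A_\alpha: T'\cap n^{\le n}=T\cap n^{\le n} \text{ and } h_{T'}\restriction (T\cap n^{\le n})=h_T\restriction(T\cap n^{\le n})\}$ for $T\in A_\alpha$, $n\in\omega$. *)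

theory Defs
  imports "HOL-Analysis.Analysis"
begin

definition Tr :: "nat list set set" where
  "Tr = {T. \<forall>s t. s @ t \<in> T \<longrightarrow> s \<in> T}"

definition Trw :: "nat list set set" where
  "Trw = {T \<in> Tr. \<not> (\<exists>f :: nat \<Rightarrow> nat. \<forall>n. map f [0..<n] \<in> T)}"

text \<open>omega_1 is represented by the successor cardinal of natLeq (a well-order on a set of
  type nat set); the countable ordinals are the elements of its field, ordered by it.\<close>

definition omega1 :: "nat set rel" where
  "omega1 = cardSuc natLeq"

definition ord_less :: "nat set \<Rightarrow> nat set \<Rightarrow> bool" where
  "ord_less x y \<longleftrightarrow> (x, y) \<in> omega1 \<and> x \<noteq> y"

text \<open>h is a rank function for T: for every node, h(nu) = sup {h(nu')+1 : nu' an immediate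
  successor of nu}, i.e. the least countable ordinal strictly above all h(nu').\<close>
definition is_rank_fun :: "nat list set \<Rightarrow> (nat list \<Rightarrow> nat set) \<Rightarrow> bool" where
  "is_rank_fun T h \<longleftrightarrow>
     (\<forall>\<nu>\<in>T. h \<nu> = wo_rel.minim omega1
         {x \<in> Field omega1. \<forall>k. \<nu> @ [k] \<in> T \<longrightarrow> ord_less (h (\<nu> @ [k])) x})"

definition h :: "nat list set \<Rightarrow> nat list \<Rightarrow> nat set" where
  "h T = (THE g. is_rank_fun T g \<and> (\<forall>\<nu>. \<nu> \<notin> T \<longrightarrow> g \<nu> = undefined))"

definition A :: "nat set \<Rightarrow> nat list set set" where
  "A \<alpha> = {T \<in> Trw. [] \<in> T \<and> h T [] = \<alpha>}"

definition box :: "nat \<Rightarrow> nat list set" where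
  "box n = {s. length s \<le> n \<and> (\<forall>i\<in>set s. i < n)}"

definition U :: "nat set \<Rightarrow> nat \<Rightarrow> nat list set \<Rightarrow> nat list set set" where
  "U \<alpha> n T = {T' \<in> A \<alpha>. T' \<inter> box n = T \<inter> box n \<and>
                   (\<forall>\<nu>\<in>T \<inter> box n. h T' \<nu> = h T \<nu>)}"

definition tau :: "nat set \<Rightarrow> nat list set topology" where
  "tau \<alpha> = topology_generated_by {U \<alpha> n T | n T. T \<in> A \<alpha>}"

text \<open>Tr as a subspace of 2^(omega^(<omega)) with the product of discrete topologies,
  identifying a set with its characteristic function.\<close>
definition Tr_top :: "nat list set topology" where
  "Tr_top = subtopology
     (pullback_topology UNIV (\<lambda>S \<nu>. \<nu> \<in> S)
        (product_topology (\<lambda>_. discrete_topology (UNIV :: bool set)) (UNIV :: nat list set)))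
     Tr"

definition Baire_space :: "'a topology \<Rightarrow> bool" where
  "Baire_space X \<longleftrightarrow>
     (\<forall>\<G>. countable \<G> \<and> (\<forall>G\<in>\<G>. openin X G \<and> X closure_of G = topspace X)
          \<longrightarrow> X closure_of (\<Inter>\<G>) = topspace X)"

definition borel_sets :: "'a topology \<Rightarrow> 'a set set" where
  "borel_sets X = sigma_sets (topspace X) {S. openin X S}"

end

theory Submission
  imports Defs
begin
context includes cardinal_syntax begin
lemma o1_card: "Card_order omega1"
  unfolding omega1_def by (simp add: cardSuc_Card_order natLeq_Card_order)

lemma o1_wo: "wo_rel omega1"
  using o1_card unfolding wo_rel_def card_order_on_def by blast

lemma countable_card_of_nat': "countable S \<longleftrightarrow> |S| \<le>o |UNIV::nat set|"
  unfolding countable_def card_of_ordLeq[symmetric] by auto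

lemma countable_card_le_natLeq': "countable S \<longleftrightarrow> |S| \<le>o natLeq"
  unfolding countable_card_of_nat' using card_of_nat ordLeq_ordIso_trans ordIso_symmetric by blast

lemma o1_countable_underS: "a \<in> Field omega1 \<Longrightarrow> countable {b. ord_less b a}"
proof -
  assume a: "a \<in> Field omega1"
  have "|underS omega1 a| <o omega1" using card_of_underS[OF o1_card a] .
  hence "|underS omega1 a| \<le>o natLeq"
    unfolding omega1_def
    using cardSuc_ordLeq_ordLess[OF natLeq_Card_order card_of_Card_order] by blast
  hence "countable (underS omega1 a)" using countable_card_le_natLeq' by blast
  moreover have "{b. ord_less b a} = underS omega1 a" unfolding ord_less_def underS_def by auto
  ultimately show ?thesis by simp
qed

lemma o1_uncountable: "\<not> countable (Field omega1)"
proof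
  assume "countable (Field omega1)"
  hence "|Field omega1| \<le>o natLeq" using countable_card_le_natLeq' by blast
  moreover have "|Field omega1| =o omega1" using card_of_Field_ordIso[OF o1_card] .
  moreover have "natLeq <o omega1" unfolding omega1_def by (simp add: cardSuc_greater natLeq_Card_order)
  ultimately have "omega1 \<le>o natLeq" using ordIso_ordLeq_trans ordIso_symmetric by blast
  thus False using \<open>natLeq <o omega1\<close> not_ordLess_ordLeq by blast
qed

lemma o1_refl: "a \<in> Field omega1 \<Longrightarrow> (a,a) \<in> omega1"
  using wo_rel.REFL[OF o1_wo] unfolding refl_on_def by blast

lemma o1_total: "a \<in> Field omega1 \<Longrightarrow> b \<in> Field omega1 \<Longrightarrow> (a,b) \<in> omega1 \<or> (b,a) \<in> omega1"
  using wo_rel.TOTALS[OF o1_wo] by blast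

lemma o1_antisym: "(a,b) \<in> omega1 \<Longrightarrow> (b,a) \<in> omega1 \<Longrightarrow> a = b"
  using wo_rel.ANTISYM[OF o1_wo] unfolding antisym_def by blast

lemma o1_trans: "(a,b) \<in> omega1 \<Longrightarrow> (b,c) \<in> omega1 \<Longrightarrow> (a,c) \<in> omega1"
  using wo_rel.TRANS[OF o1_wo] unfolding trans_def by blast

lemma o1_bound:
  assumes "countable S" "S \<subseteq> Field omega1"
  shows "\<exists>x\<in>Field omega1. \<forall>s\<in>S. ord_less s x"
proof -
  have "countable (\<Union>s\<in>S. insert s {b. ord_less b s})"
    using assms o1_countable_underS by auto
  then obtain x where x: "x \<in> Field omega1" "x \<notin> (\<Union>s\<in>S. insert s {b. ord_less b s})"
    using o1_uncountable by (metis countable_subset subsetI)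
  show ?thesis
  proof (intro bexI[OF _ x(1)] ballI)
    fix s assume s: "s \<in> S"
    hence "s \<in> Field omega1" using assms by auto
    thus "ord_less s x" using x s o1_total[of s x] unfolding ord_less_def by auto
  qed
qed

lemma o1_zero_least: "b \<in> Field omega1 \<Longrightarrow> (wo_rel.minim omega1 (Field omega1), b) \<in> omega1"
  using wo_rel.minim_least[OF o1_wo] by blast

lemma o1_zero_in: "wo_rel.minim omega1 (Field omega1) \<in> Field omega1"
  using wo_rel.minim_in[OF o1_wo, of "Field omega1"] o1_uncountable by fastforce

lemma o1_less_Field: "ord_less a b \<Longrightarrow> a \<in> Field omega1 \<and> b \<in> Field omega1"
  unfolding ord_less_def by (auto intro: FieldI1 FieldI2)


definition childrel :: "nat list set \<Rightarrow> (nat list \<times> nat list) set" where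
  "childrel T = {(\<nu> @ [k], \<nu>) | \<nu> k. \<nu> @ [k] \<in> T}"

lemma Tr_prefix: "T \<in> Tr \<Longrightarrow> s @ t \<in> T \<Longrightarrow> s \<in> T"
  unfolding Tr_def by blast

lemma wf_childrel:
  assumes T: "T \<in> Trw" shows "wf (childrel T)"
proof (rule ccontr)
  assume "\<not> wf (childrel T)"
  then obtain f where f: "\<And>i. (f (Suc i), f i) \<in> childrel T"
    unfolding wf_iff_no_infinite_down_chain by blast
  have step: "\<exists>k. f (Suc i) = f i @ [k] \<and> f (Suc i) \<in> T" for i
    using f[of i] unfolding childrel_def by auto
  have len: "length (f i) = length (f 0) + i" for i
  proof (induction i)
    case (Suc i)
    obtain k where "f (Suc i) = f i @ [k]" using step by blast
    thus ?case using Suc by simp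
  qed simp
  have pre: "\<exists>t. f (i + d) = f i @ t" for i d
  proof (induction d)
    case (Suc d)
    then obtain t where "f (i + d) = f i @ t" by blast
    moreover obtain k where "f (Suc (i + d)) = f (i + d) @ [k]" using step by blast
    ultimately show ?case by auto
  qed simp
  define b where "b m = f (Suc m) ! m" for m
  have "map b [0..<n] = take n (f (Suc n))" for n
  proof (rule nth_equalityI)
    show "length (map b [0..<n]) = length (take n (f (Suc n)))" using len[of "Suc n"] by simp
    fix m assume "m < length (map b [0..<n])"
    hence m: "m < n" by simp
    obtain t where t: "f (Suc m + (n - m)) = f (Suc m) @ t" using pre by blast
    have "Suc m + (n - m) = Suc n" using m by simp
    with t have "f (Suc n) ! m = f (Suc m) ! m" using len[of "Suc m"] by (simp add: nth_append)
    thus "map b [0..<n] ! m = take n (f (Suc n)) ! m" using m by (simp add: b_def)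
  qed
  moreover have "take n (f (Suc n)) \<in> T" for n
    using Tr_prefix[of T "take n (f (Suc n))" "drop n (f (Suc n))"] step[of n] T
    unfolding Trw_def by auto
  ultimately have "\<forall>n. map b [0..<n] \<in> T" by simp
  thus False using T unfolding Trw_def by blast
qed

definition rkF :: "nat list set \<Rightarrow> (nat list \<Rightarrow> nat set) \<Rightarrow> nat list \<Rightarrow> nat set" where
  "rkF T g \<nu> = wo_rel.minim omega1 {x \<in> Field omega1. \<forall>k. \<nu> @ [k] \<in> T \<longrightarrow> ord_less (g (\<nu> @ [k])) x}"

lemma rkF_cong: "(\<And>k. \<nu> @ [k] \<in> T \<Longrightarrow> g (\<nu> @ [k]) = g' (\<nu> @ [k])) \<Longrightarrow> rkF T g \<nu> = rkF T g' \<nu>"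
  unfolding rkF_def by (rule arg_cong[where f="wo_rel.minim omega1"]) auto

lemma is_rank_fun_rkF: "is_rank_fun T g \<longleftrightarrow> (\<forall>\<nu>\<in>T. g \<nu> = rkF T g \<nu>)"
  unfolding is_rank_fun_def rkF_def by simp

lemma rank_unique:
  assumes T: "T \<in> Trw" and g: "is_rank_fun T g" and g': "is_rank_fun T g'"
  shows "\<forall>\<nu>\<in>T. g \<nu> = g' \<nu>"
proof -
  have "\<nu> \<in> T \<longrightarrow> g \<nu> = g' \<nu>" for \<nu>
  proof (induction \<nu> rule: wf_induct[OF wf_childrel[OF T]])
    case (1 \<nu>)
    show ?case
    proof
      assume "\<nu> \<in> T"
      have "g \<nu> = rkF T g \<nu>" using g \<open>\<nu> \<in> T\<close> unfolding is_rank_fun_rkF by blast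
      also have "\<dots> = rkF T g' \<nu>"
        by (rule rkF_cong) (use 1 in \<open>auto simp: childrel_def\<close>)
      also have "\<dots> = g' \<nu>" using g' \<open>\<nu> \<in> T\<close> unfolding is_rank_fun_rkF by metis
      finally show "g \<nu> = g' \<nu>" .
    qed
  qed
  thus ?thesis by blast
qed

lemma rank_exists:
  assumes T: "T \<in> Trw"
  shows "\<exists>g. is_rank_fun T g \<and> (\<forall>\<nu>. \<nu> \<notin> T \<longrightarrow> g \<nu> = undefined)"
proof -
  define g0 where "g0 = wfrec (childrel T) (rkF T)"
  have g0: "g0 \<nu> = rkF T g0 \<nu>" for \<nu>
  proof -
    have "g0 \<nu> = rkF T (cut g0 (childrel T) \<nu>) \<nu>"
      unfolding g0_def by (rule wfrec[OF wf_childrel[OF T]])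
    also have "\<dots> = rkF T g0 \<nu>"
      by (rule rkF_cong) (auto simp: cut_apply childrel_def)
    finally show ?thesis .
  qed
  define g1 where "g1 \<nu> = (if \<nu> \<in> T then g0 \<nu> else undefined)" for \<nu>
  have "is_rank_fun T g1"
    unfolding is_rank_fun_rkF
  proof
    fix \<nu> assume "\<nu> \<in> T"
    have "rkF T g1 \<nu> = rkF T g0 \<nu>" by (rule rkF_cong) (simp add: g1_def)
    thus "g1 \<nu> = rkF T g1 \<nu>" using g0 \<open>\<nu> \<in> T\<close> by (simp add: g1_def)
  qed
  thus ?thesis by (auto simp: g1_def)
qed

lemma h_rank:
  assumes T: "T \<in> Trw"
  shows "is_rank_fun T (h T)"
    and "\<And>g. is_rank_fun T g \<Longrightarrow> \<forall>\<nu>\<in>T. h T \<nu> = g \<nu>"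
proof -
  obtain g where g: "is_rank_fun T g" "\<forall>\<nu>. \<nu> \<notin> T \<longrightarrow> g \<nu> = undefined"
    using rank_exists[OF T] by blast
  have "h T = g" unfolding h_def
  proof (rule the_equality)
    show "is_rank_fun T g \<and> (\<forall>\<nu>. \<nu> \<notin> T \<longrightarrow> g \<nu> = undefined)" using g by blast
    fix g' assume "is_rank_fun T g' \<and> (\<forall>\<nu>. \<nu> \<notin> T \<longrightarrow> g' \<nu> = undefined)"
    thus "g' = g" using rank_unique[OF T, of g' g] g by (metis ext)
  qed
  thus "is_rank_fun T (h T)" using g by simp
  show "\<And>g'. is_rank_fun T g' \<Longrightarrow> \<forall>\<nu>\<in>T. h T \<nu> = g' \<nu>"
    using rank_unique[OF T] \<open>h T = g\<close> g by metis
qed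

definition rk_good :: "nat list set \<Rightarrow> (nat list \<Rightarrow> nat set) \<Rightarrow> nat list \<Rightarrow> bool" where
  "rk_good T g \<nu> \<longleftrightarrow> g \<nu> \<in> Field omega1 \<and> (\<forall>k. \<nu> @ [k] \<in> T \<longrightarrow> ord_less (g (\<nu> @ [k])) (g \<nu>))
     \<and> (\<forall>x\<in>Field omega1. (\<forall>k. \<nu> @ [k] \<in> T \<longrightarrow> ord_less (g (\<nu> @ [k])) x) \<longrightarrow> (g \<nu>, x) \<in> omega1)"

lemma rk_good_rkF: "rk_good T g \<nu> \<Longrightarrow> g \<nu> = rkF T g \<nu>"
  unfolding rk_good_def rkF_def
  by (rule wo_rel.equals_minim[OF o1_wo]) auto

lemma rank_by_good:
  assumes T: "T \<in> Trw" and g: "\<forall>\<nu>\<in>T. rk_good T g \<nu>"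
  shows "\<forall>\<nu>\<in>T. h T \<nu> = g \<nu>"
  using h_rank(2)[OF T] g rk_good_rkF unfolding is_rank_fun_rkF by blast

lemma h_good:
  assumes T: "T \<in> Trw"
  shows "\<forall>\<nu>\<in>T. rk_good T (h T) \<nu>"
proof -
  have "\<nu> \<in> T \<longrightarrow> rk_good T (h T) \<nu>" for \<nu>
  proof (induction \<nu> rule: wf_induct[OF wf_childrel[OF T]])
    case (1 \<nu>)
    show ?case
    proof
      assume nu: "\<nu> \<in> T"
      define S where "S = {x \<in> Field omega1. \<forall>k. \<nu> @ [k] \<in> T \<longrightarrow> ord_less (h T (\<nu> @ [k])) x}"
      have ch: "\<forall>k. \<nu> @ [k] \<in> T \<longrightarrow> h T (\<nu> @ [k]) \<in> Field omega1"
        using 1 unfolding childrel_def rk_good_def by auto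
      have "countable ((\<lambda>k. h T (\<nu> @ [k])) ` {k. \<nu> @ [k] \<in> T})" by simp
      then obtain x where "x \<in> Field omega1" "\<forall>k. \<nu> @ [k] \<in> T \<longrightarrow> ord_less (h T (\<nu> @ [k])) x"
        using o1_bound[of "(\<lambda>k. h T (\<nu> @ [k])) ` {k. \<nu> @ [k] \<in> T}"] ch by blast
      hence ne: "S \<noteq> {}" unfolding S_def by blast
      have eq: "h T \<nu> = wo_rel.minim omega1 S"
        using h_rank(1)[OF T] nu unfolding is_rank_fun_def S_def by blast
      have "h T \<nu> \<in> S" unfolding eq by (rule wo_rel.minim_in[OF o1_wo]) (use ne in \<open>auto simp: S_def\<close>)
      moreover have "\<forall>x\<in>S. (h T \<nu>, x) \<in> omega1"
        unfolding eq using wo_rel.minim_least[OF o1_wo, of S] by (auto simp: S_def)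
      ultimately show "rk_good T (h T) \<nu>" unfolding rk_good_def S_def by blast
    qed
  qed
  thus ?thesis by blast
qed


lemma box_mono: "n \<le> m \<Longrightarrow> box n \<subseteq> box m"
  unfolding box_def by auto

lemma box_finite: "finite (box n)"
proof -
  have "box n \<subseteq> {xs. set xs \<subseteq> {..<n} \<and> length xs \<le> n}" unfolding box_def by auto
  thus ?thesis using finite_lists_length_le[of "{..<n}" n] finite_subset by blast
qed

lemma elem_le_sum_list: "i \<in> set s \<Longrightarrow> (i::nat) \<le> sum_list s"
  by (induction s) auto

lemma in_box: "s \<in> box (length s + sum_list s + 1)"
  unfolding box_def using elem_le_sum_list by fastforce

lemma box_prefix: "s @ t \<in> box n \<Longrightarrow> s \<in> box n"
  unfolding box_def by auto

lemma finite_exists_mono: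
  assumes "finite F" "\<And>p. p \<in> F \<Longrightarrow> \<exists>N::nat. Q p N"
    "\<And>p N N'. Q p N \<Longrightarrow> N \<le> N' \<Longrightarrow> Q p N'"
  shows "\<exists>N. \<forall>p\<in>F. Q p N"
  using assms
proof (induction F rule: finite_induct)
  case (insert x F)
  then obtain N where N: "\<forall>p\<in>F. Q p N" by blast
  obtain M where M: "Q x M" using insert by blast
  show ?case using N M insert(5)[of _ N "max N M"] insert(5)[of x M "max N M"] by auto
qed simp

lemma U_mono: "n \<le> m \<Longrightarrow> U \<alpha> m T \<subseteq> U \<alpha> n T"
proof
  fix T' assume nm: "n \<le> m" and T': "T' \<in> U \<alpha> m T"
  have "T' \<inter> box n = T \<inter> box n"
    using T' box_mono[OF nm] unfolding U_def by blast
  moreover have "\<forall>\<nu>\<in>T \<inter> box n. h T' \<nu> = h T \<nu>"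
    using T' box_mono[OF nm] unfolding U_def by blast
  ultimately show "T' \<in> U \<alpha> n T" using T' unfolding U_def by blast
qed

lemma U_self: "T \<in> A \<alpha> \<Longrightarrow> T \<in> U \<alpha> n T"
  unfolding U_def by blast

lemma U_sub: "U \<alpha> n T \<subseteq> A \<alpha>"
  unfolding U_def by blast

lemma U_recenter: "T \<in> U \<alpha> n T0 \<Longrightarrow> U \<alpha> n T = U \<alpha> n T0"
  unfolding U_def by auto

lemma topspace_tau: "topspace (tau \<alpha>) = A \<alpha>"
  unfolding tau_def topology_generated_by_topspace using U_self U_sub by blast

lemma open_U: "T \<in> A \<alpha> \<Longrightarrow> openin (tau \<alpha>) (U \<alpha> n T)"
  unfolding tau_def openin_topology_generated_by_iff
  by (rule generate_topology_on.Basis) blast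

lemma nbhd:
  assumes "openin (tau \<alpha>) W" "T \<in> W"
  shows "\<exists>n. U \<alpha> n T \<subseteq> W"
proof -
  have "generate_topology_on {U \<alpha> n T | n T. T \<in> A \<alpha>} W"
    using assms(1) unfolding tau_def openin_topology_generated_by_iff .
  thus ?thesis using assms(2)
  proof (induction arbitrary: T)
    case (Int a b)
    then obtain n1 n2 where "U \<alpha> n1 T \<subseteq> a" "U \<alpha> n2 T \<subseteq> b" by blast
    moreover have "U \<alpha> (max n1 n2) T \<subseteq> U \<alpha> n1 T" "U \<alpha> (max n1 n2) T \<subseteq> U \<alpha> n2 T"
      by (simp_all add: U_mono)
    ultimately show ?case by (intro exI[of _ "max n1 n2"]) blast
  next
    case (UN K)
    then obtain k where "k \<in> K" "T \<in> k" by blast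
    thus ?case using UN by blast
  next
    case (Basis s)
    then obtain n T0 where "s = U \<alpha> n T0" by blast
    thus ?case using Basis U_recenter by blast
  qed simp
qed


lemma A_sub_Tr: "A \<alpha> \<subseteq> Tr"
  unfolding A_def Trw_def by blast

lemma tr_open:
  assumes "openin Tr_top Q"
  shows "openin (tau \<alpha>) (Q \<inter> A \<alpha>)"
proof -
  obtain Q' where Q': "openin (pullback_topology UNIV (\<lambda>S \<nu>. \<nu> \<in> S)
        (product_topology (\<lambda>_. discrete_topology (UNIV :: bool set)) (UNIV :: nat list set))) Q'"
    "Q = Q' \<inter> Tr"
    using assms unfolding Tr_top_def openin_subtopology by blast
  then obtain V where V: "openin (product_topology (\<lambda>_. discrete_topology (UNIV :: bool set)) (UNIV :: nat list set)) V"
    "Q' = (\<lambda>S \<nu>. \<nu> \<in> S) -` V \<inter> UNIV"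
    unfolding openin_pullback_topology by blast
  show ?thesis
    unfolding openin_subopen[of _ "Q \<inter> A \<alpha>"]
  proof
    fix T assume T: "T \<in> Q \<inter> A \<alpha>"
    hence "(\<lambda>\<nu>. \<nu> \<in> T) \<in> V" using Q' V by auto
    then obtain W where W: "finite {i. W i \<noteq> UNIV}" "(\<lambda>\<nu>. \<nu> \<in> T) \<in> Pi\<^sub>E UNIV W"
      "Pi\<^sub>E UNIV W \<subseteq> V"
      using V(1) unfolding openin_product_topology_alt by auto
    obtain N where N: "\<forall>p\<in>{i. W i \<noteq> UNIV}. p \<in> box N"
      using finite_exists_mono[OF W(1), of "\<lambda>p N. p \<in> box N"] in_box box_mono by blast
    have "U \<alpha> N T \<subseteq> Q \<inter> A \<alpha>"
    proof
      fix T' assume T': "T' \<in> U \<alpha> N T"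
      have eq: "T' \<inter> box N = T \<inter> box N" using T' unfolding U_def by blast
      have "(\<lambda>\<nu>. \<nu> \<in> T') \<in> Pi\<^sub>E UNIV W"
      proof -
        have "(\<nu> \<in> T') \<in> W \<nu>" for \<nu>
        proof (cases "W \<nu> = UNIV")
          case False
          hence "\<nu> \<in> box N" using N by blast
          hence "(\<nu> \<in> T') = (\<nu> \<in> T)" using eq by blast
          thus ?thesis using W(2) by auto
        qed simp
        thus ?thesis by auto
      qed
      hence "(\<lambda>\<nu>. \<nu> \<in> T') \<in> V" using W(3) by blast
      moreover have "T' \<in> A \<alpha>" using T' U_sub by blast
      ultimately show "T' \<in> Q \<inter> A \<alpha>" using Q' V A_sub_Tr by blast
    qed
    thus "\<exists>S. openin (tau \<alpha>) S \<and> T \<in> S \<and> S \<subseteq> Q \<inter> A \<alpha>"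
      using open_U[of T \<alpha> N] U_self[of T \<alpha> N] T by blast
  qed
qed

lemma borel_trace:
  assumes "B \<in> sigma_sets Tr {S. openin Tr_top S}"
  shows "B \<inter> A \<alpha> \<in> sigma_sets (A \<alpha>) {S. openin (tau \<alpha>) S}"
  using assms
proof (induction)
  case (Basic a)
  thus ?case using tr_open by blast
next
  case (Compl a)
  have "(Tr - a) \<inter> A \<alpha> = A \<alpha> - (a \<inter> A \<alpha>)" using A_sub_Tr by blast
  thus ?case using Compl sigma_sets.Compl by metis
next
  case (Union a)
  have "(\<Union>i. a i) \<inter> A \<alpha> = (\<Union>i. a i \<inter> A \<alpha>)" by blast
  thus ?case using Union sigma_sets.Union by metis
qed (simp add: sigma_sets.Empty)

lemma part3: "B \<subseteq> A \<alpha> \<Longrightarrow> B \<in> borel_sets Tr_top \<Longrightarrow> B \<in> borel_sets (tau \<alpha>)"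
proof -
  assume B: "B \<subseteq> A \<alpha>" "B \<in> borel_sets Tr_top"
  have "topspace Tr_top = Tr" unfolding Tr_top_def by (simp add: topspace_pullback_topology)
  hence "B \<inter> A \<alpha> \<in> sigma_sets (A \<alpha>) {S. openin (tau \<alpha>) S}"
    using borel_trace B(2) unfolding borel_sets_def by metis
  thus ?thesis using B(1) unfolding borel_sets_def topspace_tau by (simp add: Int_absorb2)
qed


definition pi :: "nat \<Rightarrow> nat \<Rightarrow> nat" where
  "pi n k = (if k = n then Suc n else if k = Suc n then n else k)"

definition sw :: "nat \<Rightarrow> nat list \<Rightarrow> nat list" where
  "sw n s = (case s of [] \<Rightarrow> [] | k # r \<Rightarrow> pi n k # r)"

lemma pi_pi[simp]: "pi n (pi n k) = k"
  unfolding pi_def by auto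

lemma sw_sw[simp]: "sw n (sw n s) = s"
  unfolding sw_def by (cases s) auto

lemma sw_Nil[simp]: "sw n [] = []"
  unfolding sw_def by simp

lemma sw_single[simp]: "sw n [k] = [pi n k]"
  unfolding sw_def by simp

lemma sw_app: "s \<noteq> [] \<Longrightarrow> sw n (s @ t) = sw n s @ t"
  unfolding sw_def by (cases s) auto

lemma sw_box: "s \<in> box n \<Longrightarrow> sw n s = s"
  unfolding sw_def box_def pi_def by (cases s) auto

lemma sw_ne: "sw n s = [] \<longleftrightarrow> s = []"
  unfolding sw_def by (cases s) auto

lemma sw_children:
  "(\<forall>k. \<nu> @ [k] \<in> sw n -` T \<longrightarrow> P (sw n (\<nu> @ [k]))) \<longleftrightarrow>
   (\<forall>k. sw n \<nu> @ [k] \<in> T \<longrightarrow> P (sw n \<nu> @ [k]))"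
proof (cases "\<nu> = []")
  case True
  show ?thesis unfolding True by simp (metis pi_pi)
next
  case False
  thus ?thesis by (simp add: sw_app)
qed

lemma sw_Trw:
  assumes T: "T \<in> Trw" shows "sw n -` T \<in> Trw"
proof -
  have Tr: "T \<in> Tr" using T unfolding Trw_def by blast
  have "sw n -` T \<in> Tr" unfolding Tr_def
  proof (intro CollectI allI impI)
    fix s t assume st: "s @ t \<in> sw n -` T"
    show "s \<in> sw n -` T"
    proof (cases "s = []")
      case True
      thus ?thesis using st Tr_prefix[OF Tr, of "[]" "sw n (s @ t)"] by simp
    next
      case False
      thus ?thesis using st Tr_prefix[OF Tr, of "sw n s" t] by (simp add: sw_app)
    qed
  qed
  moreover have "\<not> (\<exists>f :: nat \<Rightarrow> nat. \<forall>m. map f [0..<m] \<in> sw n -` T)"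
  proof
    assume "\<exists>f :: nat \<Rightarrow> nat. \<forall>m. map f [0..<m] \<in> sw n -` T"
    then obtain b where b: "\<forall>m. sw n (map b [0..<m]) \<in> T" by auto
    define b' where "b' = b(0 := pi n (b 0))"
    have "sw n (map b [0..<m]) = map b' [0..<m]" for m
    proof (cases m)
      case (Suc m')
      have "map b' [1..<Suc m'] = map b [1..<Suc m']" by (rule map_cong) (auto simp: b'_def)
      thus ?thesis unfolding Suc by (simp add: upt_conv_Cons sw_def b'_def del: upt_Suc)
    qed simp
    hence "\<forall>m. map b' [0..<m] \<in> T" using b by metis
    thus False using T unfolding Trw_def by blast
  qed
  ultimately show ?thesis unfolding Trw_def by blast
qed

lemma sw_rank:
  assumes T: "T \<in> Trw"
  shows "\<forall>\<nu>\<in>sw n -` T. h (sw n -` T) \<nu> = h T (sw n \<nu>)"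
proof (rule rank_by_good[OF sw_Trw[OF T]])
  show "\<forall>\<nu>\<in>sw n -` T. rk_good (sw n -` T) (\<lambda>s. h T (sw n s)) \<nu>"
  proof
    fix \<nu> assume "\<nu> \<in> sw n -` T"
    hence g: "rk_good T (h T) (sw n \<nu>)" using h_good[OF T] by auto
    show "rk_good (sw n -` T) (\<lambda>s. h T (sw n s)) \<nu>"
      unfolding rk_good_def
      using g unfolding rk_good_def
      using sw_children[of \<nu> n T "\<lambda>s. ord_less (h T s) (h T (sw n \<nu>))"]
        sw_children[of \<nu> n T "\<lambda>s. ord_less (h T s) _"]
      by simp
  qed
qed


abbreviation zero1 :: "nat set" where "zero1 \<equiv> wo_rel.minim omega1 (Field omega1)"

lemma leaf_Trw:
  assumes T: "T \<in> Trw" and e: "[] \<in> T"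
  shows "insert [n] T \<in> Trw"
proof -
  have Tr: "T \<in> Tr" using T unfolding Trw_def by blast
  have "insert [n] T \<in> Tr" unfolding Tr_def
  proof (intro CollectI allI impI)
    fix s t assume st: "s @ t \<in> insert [n] T"
    show "s \<in> insert [n] T"
    proof (cases "s @ t = [n]")
      case True
      hence "s = [] \<or> s = [n]" by (cases s) auto
      thus ?thesis using e by auto
    next
      case False
      thus ?thesis using st Tr_prefix[OF Tr, of s t] by auto
    qed
  qed
  moreover have "\<not> (\<exists>f :: nat \<Rightarrow> nat. \<forall>m. map f [0..<m] \<in> insert [n] T)"
  proof
    assume "\<exists>f :: nat \<Rightarrow> nat. \<forall>m. map f [0..<m] \<in> insert [n] T"
    then obtain b :: "nat \<Rightarrow> nat" where b: "\<forall>m. map b [0..<m] \<in> insert [n] T" by auto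
    have "map b [0..<m] \<in> T" for m
    proof -
      have eq: "map b [0..<m + 2] = map b [0..<m] @ map b [m..<m+2]"
        by (simp add: upt_add_eq_append[of 0 m 2])
      have "length (map b [0..<m + 2]) \<noteq> length [n]" by simp
      hence "map b [0..<m + 2] \<in> T" using b by (metis insertE)
      thus ?thesis using Tr_prefix[OF Tr] eq by metis
    qed
    thus False using T unfolding Trw_def by blast
  qed
  ultimately show ?thesis unfolding Trw_def by blast
qed

lemma leaf_rank:
  assumes T: "T \<in> Trw" and e: "[] \<in> T" and nT: "[n] \<notin> T"
    and pos: "ord_less zero1 (h T [])"
  shows "\<forall>\<nu>\<in>T. h (insert [n] T) \<nu> = h T \<nu>"
proof -
  define g where "g = (h T)([n] := zero1)"
  have Tr: "T \<in> Tr" using T unfolding Trw_def by blast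
  have good: "\<forall>\<nu>\<in>insert [n] T. rk_good (insert [n] T) g \<nu>"
  proof
    fix \<nu> assume nu: "\<nu> \<in> insert [n] T"
    show "rk_good (insert [n] T) g \<nu>"
    proof (cases "\<nu> = [n]")
      case True
      have "\<nu> @ [k] \<notin> insert [n] T" for k
        using nT Tr_prefix[OF Tr, of "[n]" "[k]"] True by auto
      thus ?thesis unfolding rk_good_def using True o1_zero_in o1_zero_least by (simp add: g_def)
    next
      case False
      hence nuT: "\<nu> \<in> T" using nu by blast
      have gT: "rk_good T (h T) \<nu>" using h_good[OF T] nuT by blast
      have gnu: "g \<nu> = h T \<nu>" using False by (simp add: g_def)
      show ?thesis
      proof (cases "\<nu> = []")
        case False
        have ch: "\<nu> @ [k] \<in> insert [n] T \<longleftrightarrow> \<nu> @ [k] \<in> T" for k using False by (cases \<nu>) auto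
        have gch: "g (\<nu> @ [k]) = h T (\<nu> @ [k])" for k using False by (cases \<nu>) (auto simp: g_def)
        show ?thesis using gT unfolding rk_good_def gnu ch gch by simp
      next
        case True
        have gch: "[k] \<in> T \<Longrightarrow> g [k] = h T [k]" for k using nT by (auto simp: g_def)
        have gn: "g [n] = zero1" by (simp add: g_def)
        show ?thesis using gT pos unfolding rk_good_def gnu[unfolded True] True
          by (simp add: gch gn)
      qed
    qed
  qed
  have "\<forall>\<nu>\<in>insert [n] T. h (insert [n] T) \<nu> = g \<nu>"
    by (rule rank_by_good[OF leaf_Trw[OF T e] good])
  thus ?thesis using nT by (auto simp: g_def)
qed

definition rmv :: "nat \<Rightarrow> nat list set \<Rightarrow> nat list set" where
  "rmv n T = {s \<in> T. \<not> (\<exists>r. s = n # r)}"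

lemma rmv_Trw:
  assumes T: "T \<in> Trw" shows "rmv n T \<in> Trw"
proof -
  have Tr: "T \<in> Tr" using T unfolding Trw_def by blast
  have "rmv n T \<in> Tr" unfolding Tr_def
  proof (intro CollectI allI impI)
    fix s t assume st: "s @ t \<in> rmv n T"
    thus "s \<in> rmv n T" using Tr_prefix[OF Tr, of s t] unfolding rmv_def by (cases s) auto
  qed
  moreover have "rmv n T \<subseteq> T" unfolding rmv_def by blast
  ultimately show ?thesis using T unfolding Trw_def by blast
qed

lemma rmv_rank:
  assumes T: "T \<in> Trw" and m: "[m] \<in> T" "m \<noteq> n" and eq: "h T [n] = h T [m]"
  shows "\<forall>\<nu>\<in>rmv n T. h (rmv n T) \<nu> = h T \<nu>"
proof (rule rank_by_good[OF rmv_Trw[OF T]])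
  show "\<forall>\<nu>\<in>rmv n T. rk_good (rmv n T) (h T) \<nu>"
  proof
    fix \<nu> assume nu: "\<nu> \<in> rmv n T"
    hence gT: "rk_good T (h T) \<nu>" using h_good[OF T] unfolding rmv_def by blast
    show "rk_good (rmv n T) (h T) \<nu>"
    proof (cases "\<nu> = []")
      case False
      have ch: "\<nu> @ [k] \<in> rmv n T \<longleftrightarrow> \<nu> @ [k] \<in> T" for k
        using False nu unfolding rmv_def by (cases \<nu>) auto
      show ?thesis using gT unfolding rk_good_def ch by simp
    next
      case True
      have ch: "[k] \<in> rmv n T \<longleftrightarrow> [k] \<in> T \<and> k \<noteq> n" for k
        unfolding rmv_def by auto
      show ?thesis using gT m eq unfolding rk_good_def True by (simp add: ch) metis
    qed
  qed
qed


lemma perturb: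
  assumes pos: "ord_less zero1 \<alpha>" and T: "T \<in> A \<alpha>"
  shows "\<exists>T'. T' \<in> U \<alpha> N T \<and> T' \<noteq> T"
proof -
  have TW: "T \<in> Trw" and e: "[] \<in> T" and hT: "h T [] = \<alpha>" using T unfolding A_def by auto
  have Tr: "T \<in> Tr" using TW unfolding Trw_def by blast
  show ?thesis
  proof (cases "sw N -` T = T")
    case False
    let ?T' = "sw N -` T"
    have r: "\<forall>\<nu>\<in>?T'. h ?T' \<nu> = h T (sw N \<nu>)" using sw_rank[OF TW] .
    have "[] \<in> ?T'" using e by simp
    hence "h ?T' [] = \<alpha>" using r hT by simp
    hence "?T' \<in> A \<alpha>" unfolding A_def using sw_Trw[OF TW] \<open>[] \<in> ?T'\<close> by blast
    moreover have "?T' \<inter> box N = T \<inter> box N" using sw_box by auto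
    moreover have "\<forall>\<nu>\<in>T \<inter> box N. h ?T' \<nu> = h T \<nu>"
    proof
      fix \<nu> assume "\<nu> \<in> T \<inter> box N"
      hence "sw N \<nu> = \<nu>" "\<nu> \<in> ?T'" using sw_box by auto
      thus "h ?T' \<nu> = h T \<nu>" using r by metis
    qed
    ultimately show ?thesis using False unfolding U_def by blast
  next
    case sym: True
    show ?thesis
    proof (cases "[N] \<in> T")
      case False
      let ?T' = "insert [N] T"
      have r: "\<forall>\<nu>\<in>T. h ?T' \<nu> = h T \<nu>" using leaf_rank[OF TW e False] pos hT by blast
      have "h ?T' [] = \<alpha>" using r hT e by blast
      hence "?T' \<in> A \<alpha>" unfolding A_def using leaf_Trw[OF TW e] e by blast
      moreover have "[N] \<notin> box N" unfolding box_def by auto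
      hence "?T' \<inter> box N = T \<inter> box N" by auto
      moreover have "\<forall>\<nu>\<in>T \<inter> box N. h ?T' \<nu> = h T \<nu>" using r by auto
      ultimately show ?thesis using False unfolding U_def by blast
    next
      case True
      let ?T' = "rmv N T"
      have "[N] \<in> sw N -` T" using True sym by simp
      hence m: "[Suc N] \<in> T" by (simp add: pi_def)
      have "h T [N] = h T [Suc N]"
      proof -
        have "[N] \<in> sw N -` T" using True sym by simp
        hence "h (sw N -` T) [N] = h T (sw N [N])" using sw_rank[OF TW] by blast
        hence "h T [N] = h T (sw N [N])" by (simp only: sym)
        thus ?thesis by (simp add: pi_def)
      qed
      hence r: "\<forall>\<nu>\<in>?T'. h ?T' \<nu> = h T \<nu>" using rmv_rank[OF TW m] by simp
      have e': "[] \<in> ?T'" using e unfolding rmv_def by simp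
      have "h ?T' [] = \<alpha>" using r hT e' by blast
      hence "?T' \<in> A \<alpha>" unfolding A_def using rmv_Trw[OF TW] e' by blast
      moreover have "?T' \<inter> box N = T \<inter> box N" unfolding rmv_def box_def by auto
      moreover have "\<forall>\<nu>\<in>T \<inter> box N. h ?T' \<nu> = h T \<nu>"
        using r \<open>?T' \<inter> box N = T \<inter> box N\<close> by blast
      moreover have "?T' \<noteq> T" using True unfolding rmv_def by auto
      ultimately show ?thesis unfolding U_def by blast
    qed
  qed
qed

lemma part2:
  assumes pos: "ord_less zero1 \<alpha>" and T: "T \<in> topspace (tau \<alpha>)"
  shows "\<not> openin (tau \<alpha>) {T}"
proof
  assume "openin (tau \<alpha>) {T}"
  then obtain N where N: "U \<alpha> N T \<subseteq> {T}" using nbhd[of \<alpha> "{T}" T] by blast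
  have "T \<in> A \<alpha>" using T by (simp only: topspace_tau)
  then obtain T' where "T' \<in> U \<alpha> N T" "T' \<noteq> T" using perturb[OF pos] by blast
  thus False using N by blast
qed


definition Eo :: "nat set \<Rightarrow> nat set set" where
  "Eo \<gamma> = {\<beta>. ord_less \<beta> \<gamma>}"

definition wit :: "nat list set \<Rightarrow> nat \<Rightarrow> nat list set \<Rightarrow> nat \<Rightarrow> bool" where
  "wit T n T' n' \<longleftrightarrow> (\<forall>\<nu>\<in>T \<inter> box n. \<forall>j\<le>n. Eo (h T \<nu>) \<noteq> {} \<longrightarrow>
      (\<exists>k. \<nu> @ [k] \<in> T' \<and> \<nu> @ [k] \<in> box n' \<and> (from_nat_into (Eo (h T \<nu>)) j, h T' (\<nu> @ [k])) \<in> omega1))"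

lemma no_desc: "(\<And>m. ord_less (a (Suc m)) (a m)) \<Longrightarrow> False"
proof -
  assume d: "\<And>m. ord_less (a (Suc m)) (a m)"
  let ?S = "range a"
  have sub: "?S \<subseteq> Field omega1" using d o1_less_Field by blast
  have "wo_rel.minim omega1 ?S \<in> ?S" using wo_rel.minim_in[OF o1_wo sub] by blast
  then obtain m where m: "wo_rel.minim omega1 ?S = a m" by blast
  have "(a m, a (Suc m)) \<in> omega1" using wo_rel.minim_least[OF o1_wo sub, of "a (Suc m)"] m by simp
  moreover have "(a (Suc m), a m) \<in> omega1" "a (Suc m) \<noteq> a m" using d[of m] unfolding ord_less_def by auto
  ultimately show False using o1_antisym by blast
qed

lemma limit:
  assumes H1: "\<And>i. Tn i \<in> A \<alpha>"
    and H2: "\<And>i. nn i < nn (Suc i)"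
    and H3: "\<And>i. U \<alpha> (nn (Suc i)) (Tn (Suc i)) \<subseteq> U \<alpha> (nn i) (Tn i)"
    and H4: "\<And>i. wit (Tn i) (nn i) (Tn (Suc i)) (nn (Suc i))"
  shows "\<exists>T. \<forall>i. T \<in> U \<alpha> (nn i) (Tn i)"
proof -
  have TW: "Tn i \<in> Trw" for i using H1 unfolding A_def by blast
  have nn_ge: "i \<le> nn i" for i
    by (induction i) (use H2 in \<open>auto simp: Suc_le_eq intro: le_less_trans\<close>)
  have nn_mono: "i \<le> j \<Longrightarrow> nn i \<le> nn j" for i j
    using H2 by (simp add: lift_Suc_mono_le less_imp_le)
  have F4: "i \<le> j \<Longrightarrow> U \<alpha> (nn j) (Tn j) \<subseteq> U \<alpha> (nn i) (Tn i)" for i j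
  proof (induction j rule: dec_induct)
    case (step j) thus ?case using H3[of j] by blast
  qed simp
  have F5: "i \<le> j \<Longrightarrow> Tn j \<in> U \<alpha> (nn i) (Tn i)" for i j
    using F4 U_self[OF H1] by blast
  have F5a: "i \<le> j \<Longrightarrow> Tn j \<inter> box (nn i) = Tn i \<inter> box (nn i)" for i j
    using F5 unfolding U_def by blast
  have F5b: "i \<le> j \<Longrightarrow> \<nu> \<in> Tn i \<inter> box (nn i) \<Longrightarrow> h (Tn j) \<nu> = h (Tn i) \<nu>" for i j \<nu>
    using F5 unfolding U_def by blast
  define Tinf where "Tinf = (\<Union>i. Tn i \<inter> box (nn i))"
  have L1: "Tinf \<inter> box (nn i) = Tn i \<inter> box (nn i)" for i
  proof
    show "Tn i \<inter> box (nn i) \<subseteq> Tinf \<inter> box (nn i)" unfolding Tinf_def by blast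
    show "Tinf \<inter> box (nn i) \<subseteq> Tn i \<inter> box (nn i)"
    proof
      fix x assume "x \<in> Tinf \<inter> box (nn i)"
      then obtain j where x: "x \<in> Tn j" "x \<in> box (nn j)" "x \<in> box (nn i)" unfolding Tinf_def by blast
      show "x \<in> Tn i \<inter> box (nn i)"
      proof (cases "i \<le> j")
        case True thus ?thesis using F5a[OF True] x by blast
      next
        case False
        hence "j \<le> i" by simp
        hence "x \<in> Tn i \<inter> box (nn j)" using F5a x by blast
        thus ?thesis using x by blast
      qed
    qed
  qed
  have L2: "\<nu> \<in> Tinf \<Longrightarrow> \<exists>i. \<forall>j\<ge>i. \<nu> \<in> Tn j \<inter> box (nn j)" for \<nu>
  proof -
    assume "\<nu> \<in> Tinf"
    then obtain i where "\<nu> \<in> box (nn i)" unfolding Tinf_def by blast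
    have "\<nu> \<in> Tn j \<inter> box (nn j)" if "i \<le> j" for j
    proof -
      have "\<nu> \<in> box (nn j)" using box_mono[OF nn_mono[OF that]] \<open>\<nu> \<in> box (nn i)\<close> by blast
      hence "\<nu> \<in> Tinf \<inter> box (nn j)" using \<open>\<nu> \<in> Tinf\<close> by blast
      thus ?thesis unfolding L1 .
    qed
    thus ?thesis by blast
  qed
  define \<rho> where "\<rho> \<nu> = h (Tn (LEAST i. \<nu> \<in> Tn i \<inter> box (nn i))) \<nu>" for \<nu>
  have L3: "\<nu> \<in> Tn i \<inter> box (nn i) \<Longrightarrow> \<rho> \<nu> = h (Tn i) \<nu>" for \<nu> i
  proof -
    assume a: "\<nu> \<in> Tn i \<inter> box (nn i)"
    let ?i0 = "LEAST i. \<nu> \<in> Tn i \<inter> box (nn i)"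
    have "?i0 \<le> i" using a by (rule Least_le)
    moreover have "\<nu> \<in> Tn ?i0 \<inter> box (nn ?i0)" using a by (rule LeastI)
    ultimately have "h (Tn i) \<nu> = h (Tn ?i0) \<nu>" by (rule F5b)
    thus ?thesis unfolding \<rho>_def by simp
  qed
  have good_i: "\<nu> \<in> Tn i \<Longrightarrow> rk_good (Tn i) (h (Tn i)) \<nu>" for i \<nu> using h_good[OF TW] by blast
  have both: "\<nu> \<in> Tinf \<Longrightarrow> \<mu> \<in> Tinf \<Longrightarrow> \<exists>i. \<nu> \<in> Tn i \<inter> box (nn i) \<and> \<mu> \<in> Tn i \<inter> box (nn i)" for \<nu> \<mu>
  proof -
    assume "\<nu> \<in> Tinf" "\<mu> \<in> Tinf"
    obtain i1 where "\<forall>j\<ge>i1. \<nu> \<in> Tn j \<inter> box (nn j)" using L2 \<open>\<nu> \<in> Tinf\<close> by blast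
    moreover obtain i2 where "\<forall>j\<ge>i2. \<mu> \<in> Tn j \<inter> box (nn j)" using L2 \<open>\<mu> \<in> Tinf\<close> by blast
    ultimately have "\<nu> \<in> Tn (max i1 i2) \<inter> box (nn (max i1 i2)) \<and> \<mu> \<in> Tn (max i1 i2) \<inter> box (nn (max i1 i2))"
      by simp
    thus ?thesis by blast
  qed
  have child_less: "\<nu> \<in> Tinf \<Longrightarrow> \<nu> @ [k] \<in> Tinf \<Longrightarrow> ord_less (\<rho> (\<nu> @ [k])) (\<rho> \<nu>)" for \<nu> k
  proof -
    assume "\<nu> \<in> Tinf" "\<nu> @ [k] \<in> Tinf"
    then obtain i where i: "\<nu> \<in> Tn i \<inter> box (nn i)" "\<nu> @ [k] \<in> Tn i \<inter> box (nn i)" using both by blast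
    have "ord_less (h (Tn i) (\<nu> @ [k])) (h (Tn i) \<nu>)" using good_i[of \<nu> i] i unfolding rk_good_def by blast
    thus ?thesis using L3[OF i(1)] L3[OF i(2)] by simp
  qed
  have TinfTr: "Tinf \<in> Tr" unfolding Tr_def
  proof (intro CollectI allI impI)
    fix s t assume "s @ t \<in> Tinf"
    then obtain i where "s @ t \<in> Tn i" "s @ t \<in> box (nn i)" unfolding Tinf_def by blast
    hence "s \<in> Tn i" "s \<in> box (nn i)" using Tr_prefix TW box_prefix unfolding Trw_def by blast+
    thus "s \<in> Tinf" unfolding Tinf_def by blast
  qed
  have TinfW: "Tinf \<in> Trw"
  proof -
    have "\<not> (\<exists>f :: nat \<Rightarrow> nat. \<forall>m. map f [0..<m] \<in> Tinf)"
    proof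
      assume "\<exists>f :: nat \<Rightarrow> nat. \<forall>m. map f [0..<m] \<in> Tinf"
      then obtain b :: "nat \<Rightarrow> nat" where b: "\<forall>m. map b [0..<m] \<in> Tinf" by blast
      show False
      proof (rule no_desc)
        fix m
        have "map b [0..<m] @ [b m] \<in> Tinf" using b[rule_format, of "Suc m"] by simp
        thus "ord_less (\<rho> (map b [0..<Suc m])) (\<rho> (map b [0..<m]))"
          using child_less[of "map b [0..<m]" "b m"] b by simp
      qed
    qed
    thus ?thesis using TinfTr unfolding Trw_def by blast
  qed
  have goodinf: "\<forall>\<nu>\<in>Tinf. rk_good Tinf \<rho> \<nu>"
  proof
    fix \<nu> assume nu: "\<nu> \<in> Tinf"
    then obtain i0 where i0: "\<forall>j\<ge>i0. \<nu> \<in> Tn j \<inter> box (nn j)" using L2 by blast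
    have rF: "\<rho> \<nu> \<in> Field omega1" using good_i[of \<nu> i0] i0 L3[of \<nu> i0] unfolding rk_good_def by auto
    have rch: "\<nu> @ [k] \<in> Tinf \<Longrightarrow> \<rho> (\<nu> @ [k]) \<in> Field omega1" for k
      using child_less[OF nu] o1_less_Field by blast
    have minimal: "(\<rho> \<nu>, x) \<in> omega1"
      if x: "x \<in> Field omega1" "\<forall>k. \<nu> @ [k] \<in> Tinf \<longrightarrow> ord_less (\<rho> (\<nu> @ [k])) x" for x
    proof (rule ccontr)
      assume nle: "(\<rho> \<nu>, x) \<notin> omega1"
      hence xl: "ord_less x (\<rho> \<nu>)" using o1_total[OF rF x(1)] unfolding ord_less_def by auto
      hence xE: "x \<in> Eo (\<rho> \<nu>)" unfolding Eo_def by simp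
      obtain j where j: "from_nat_into (Eo (\<rho> \<nu>)) j = x"
        using from_nat_into_surj[OF o1_countable_underS[OF rF] xE[unfolded Eo_def]] unfolding Eo_def by blast
      define i where "i = max i0 j"
      have nui: "\<nu> \<in> Tn i \<inter> box (nn i)" using i0 by (simp add: i_def)
      have ji: "j \<le> nn i" using nn_ge[of i] by (simp add: i_def)
      have rho_i: "\<rho> \<nu> = h (Tn i) \<nu>" using L3[OF nui] .
      obtain k where k: "\<nu> @ [k] \<in> Tn (Suc i)" "\<nu> @ [k] \<in> box (nn (Suc i))"
         "(x, h (Tn (Suc i)) (\<nu> @ [k])) \<in> omega1"
        using H4[of i] nui ji xE j unfolding wit_def rho_i by blast
      have kin: "\<nu> @ [k] \<in> Tinf" using k unfolding Tinf_def by blast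
      have "\<rho> (\<nu> @ [k]) = h (Tn (Suc i)) (\<nu> @ [k])" using L3 k by blast
      hence "(x, \<rho> (\<nu> @ [k])) \<in> omega1" using k by simp
      moreover have "ord_less (\<rho> (\<nu> @ [k])) x" using x kin by blast
      ultimately show False using o1_antisym unfolding ord_less_def by blast
    qed
    show "rk_good Tinf \<rho> \<nu>" unfolding rk_good_def using rF child_less[OF nu] minimal by blast
  qed
  have hinf: "\<forall>\<nu>\<in>Tinf. h Tinf \<nu> = \<rho> \<nu>" by (rule rank_by_good[OF TinfW goodinf])
  have e0: "[] \<in> Tn 0 \<inter> box (nn 0)" using H1[of 0] unfolding A_def box_def by simp
  have "Tinf \<in> A \<alpha>"
  proof -
    have "[] \<in> Tinf" using e0 unfolding Tinf_def by blast
    moreover have "h Tinf [] = \<alpha>" using hinf L3[OF e0] H1[of 0] \<open>[] \<in> Tinf\<close> unfolding A_def by auto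
    ultimately show ?thesis using TinfW unfolding A_def by blast
  qed
  moreover have "\<forall>\<nu>\<in>Tn i \<inter> box (nn i). h Tinf \<nu> = h (Tn i) \<nu>" for i
    using hinf L3 L1 by blast
  ultimately have "\<forall>i. Tinf \<in> U \<alpha> (nn i) (Tn i)" using L1 unfolding U_def by blast
  thus ?thesis by blast
qed


lemma step:
  assumes T: "T \<in> A \<alpha>" and G: "openin (tau \<alpha>) G" and D: "tau \<alpha> closure_of G = topspace (tau \<alpha>)"
  shows "\<exists>T' n'. T' \<in> A \<alpha> \<and> n < n' \<and> U \<alpha> n' T' \<subseteq> U \<alpha> n T \<inter> G \<and> wit T n T' n'"
proof -
  have "T \<in> tau \<alpha> closure_of G" using D T topspace_tau by simp
  hence "\<exists>y. y \<in> G \<and> y \<in> U \<alpha> n T"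
    unfolding in_closure_of using open_U[OF T, of n] U_self[OF T, of n] by blast
  then obtain T' where T'G: "T' \<in> G" and T'U: "T' \<in> U \<alpha> n T" by blast
  have T'A: "T' \<in> A \<alpha>" using T'U U_sub by blast
  have T'W: "T' \<in> Trw" using T'A unfolding A_def by blast
  have "openin (tau \<alpha>) (U \<alpha> n T \<inter> G)" using open_U[OF T] G by (rule openin_Int)
  moreover have "T' \<in> U \<alpha> n T \<inter> G" using T'G T'U by blast
  ultimately obtain m where m: "U \<alpha> m T' \<subseteq> U \<alpha> n T \<inter> G" by (metis nbhd)
  have eqbox: "T' \<inter> box n = T \<inter> box n" and eqh: "\<forall>\<nu>\<in>T \<inter> box n. h T' \<nu> = h T \<nu>"
    using T'U unfolding U_def by blast+
  define Q where "Q p N \<longleftrightarrow> (Eo (h T (fst p)) \<noteq> {} \<longrightarrow>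
      (\<exists>k. fst p @ [k] \<in> T' \<and> fst p @ [k] \<in> box N \<and> (from_nat_into (Eo (h T (fst p))) (snd p), h T' (fst p @ [k])) \<in> omega1))"
    for p :: "nat list \<times> nat" and N
  have fin: "finite ((T \<inter> box n) \<times> {..n})" using box_finite by auto
  have ex: "\<exists>N. Q p N" if p: "p \<in> (T \<inter> box n) \<times> {..n}" for p
  proof (cases "Eo (h T (fst p)) = {}")
    case True thus ?thesis unfolding Q_def by blast
  next
    case False
    obtain \<nu> j where pj: "p = (\<nu>, j)" by (cases p)
    have nu: "\<nu> \<in> T \<inter> box n" using p pj by auto
    let ?\<beta> = "from_nat_into (Eo (h T \<nu>)) j"
    have "?\<beta> \<in> Eo (h T \<nu>)" using from_nat_into False pj by simp
    hence bl: "ord_less ?\<beta> (h T' \<nu>)" using eqh nu unfolding Eo_def by simp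
    have nuT': "\<nu> \<in> T'" using nu eqbox by blast
    have g: "rk_good T' (h T') \<nu>" using h_good[OF T'W] nuT' by blast
    have "\<exists>k. \<nu> @ [k] \<in> T' \<and> (?\<beta>, h T' (\<nu> @ [k])) \<in> omega1"
    proof (rule ccontr)
      assume no: "\<not> (\<exists>k. \<nu> @ [k] \<in> T' \<and> (?\<beta>, h T' (\<nu> @ [k])) \<in> omega1)"
      have bF: "?\<beta> \<in> Field omega1" using o1_less_Field[OF bl] by blast
      have "\<forall>k. \<nu> @ [k] \<in> T' \<longrightarrow> ord_less (h T' (\<nu> @ [k])) ?\<beta>"
      proof (intro allI impI)
        fix k assume k: "\<nu> @ [k] \<in> T'"
        have "h T' (\<nu> @ [k]) \<in> Field omega1" using h_good[OF T'W] k unfolding rk_good_def by blast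
        moreover have nle: "(?\<beta>, h T' (\<nu> @ [k])) \<notin> omega1" using no k by blast
        ultimately have "(h T' (\<nu> @ [k]), ?\<beta>) \<in> omega1" using o1_total[OF _ bF, of "h T' (\<nu> @ [k])"] by blast
        moreover have "h T' (\<nu> @ [k]) \<noteq> ?\<beta>" using nle o1_refl[OF bF] by auto
        ultimately show "ord_less (h T' (\<nu> @ [k])) ?\<beta>" unfolding ord_less_def by blast
      qed
      hence "(h T' \<nu>, ?\<beta>) \<in> omega1" using g bF unfolding rk_good_def by blast
      thus False using bl o1_antisym unfolding ord_less_def by blast
    qed
    then obtain k where k: "\<nu> @ [k] \<in> T'" "(?\<beta>, h T' (\<nu> @ [k])) \<in> omega1" by blast
    have "Q p (length (\<nu> @ [k]) + sum_list (\<nu> @ [k]) + 1)"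
      unfolding Q_def pj fst_conv snd_conv using k in_box[of "\<nu> @ [k]"] by blast
    thus ?thesis by blast
  qed
  have mono: "Q p N \<Longrightarrow> N \<le> N' \<Longrightarrow> Q p N'" for p N N'
  proof -
    assume "Q p N" "N \<le> N'"
    show ?thesis unfolding Q_def
    proof
      assume ne: "Eo (h T (fst p)) \<noteq> {}"
      then obtain k where "fst p @ [k] \<in> T'" "fst p @ [k] \<in> box N"
          "(from_nat_into (Eo (h T (fst p))) (snd p), h T' (fst p @ [k])) \<in> omega1"
        using \<open>Q p N\<close> unfolding Q_def by blast
      moreover have "fst p @ [k] \<in> box N'" using box_mono[OF \<open>N \<le> N'\<close>] \<open>fst p @ [k] \<in> box N\<close> by (rule subsetD)
      ultimately show "\<exists>k. fst p @ [k] \<in> T' \<and> fst p @ [k] \<in> box N' \<and>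
          (from_nat_into (Eo (h T (fst p))) (snd p), h T' (fst p @ [k])) \<in> omega1" by blast
    qed
  qed
  have "\<exists>N. \<forall>p\<in>(T \<inter> box n) \<times> {..n}. Q p N"
  proof (rule finite_exists_mono[OF fin])
    fix p assume "p \<in> (T \<inter> box n) \<times> {..n}"
    thus "\<exists>N. Q p N" by (rule ex)
  next
    fix p N N' assume "Q p N" "N \<le> N'"
    thus "Q p N'" by (rule mono)
  qed
  then obtain N where N: "\<forall>p\<in>(T \<inter> box n) \<times> {..n}. Q p N" by (elim exE)
  define n' where "n' = max (max m N) (Suc n)"
  have "m \<le> n'" unfolding n'_def by simp
  hence "U \<alpha> n' T' \<subseteq> U \<alpha> m T'" by (rule U_mono)
  hence "U \<alpha> n' T' \<subseteq> U \<alpha> n T \<inter> G" using m by (rule subset_trans)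
  moreover have "wit T n T' n'"
    unfolding wit_def
  proof (intro ballI allI impI)
    fix \<nu> j assume nu: "\<nu> \<in> T \<inter> box n" and j: "j \<le> n" and ne: "Eo (h T \<nu>) \<noteq> {}"
    have "N \<le> n'" unfolding n'_def by simp
    moreover have "Q (\<nu>, j) N" using N nu j by blast
    ultimately have "Q (\<nu>, j) n'" using mono by blast
    thus "\<exists>k. \<nu> @ [k] \<in> T' \<and> \<nu> @ [k] \<in> box n' \<and> (from_nat_into (Eo (h T \<nu>)) j, h T' (\<nu> @ [k])) \<in> omega1"
      using ne unfolding Q_def by simp
  qed
  moreover have "n < n'" unfolding n'_def by simp
  ultimately show ?thesis using T'A by blast
qed


lemma part1: "Baire_space (tau \<alpha>)"
  unfolding Baire_space_def
proof (intro allI impI)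
  fix \<G> assume H: "countable \<G> \<and> (\<forall>G\<in>\<G>. openin (tau \<alpha>) G \<and> tau \<alpha> closure_of G = topspace (tau \<alpha>))"
  show "tau \<alpha> closure_of \<Inter>\<G> = topspace (tau \<alpha>)"
  proof (rule subset_antisym[OF closure_of_subset_topspace], rule subsetI)
    fix T0 assume T0: "T0 \<in> topspace (tau \<alpha>)"
    have T0A: "T0 \<in> A \<alpha>" using T0 unfolding topspace_tau .
    show "T0 \<in> tau \<alpha> closure_of \<Inter>\<G>"
      unfolding in_closure_of
    proof (intro conjI allI impI T0)
      fix W assume W: "T0 \<in> W \<and> openin (tau \<alpha>) W"
      have "\<exists>n. U \<alpha> n T0 \<subseteq> W" using W by (intro nbhd) auto
      then obtain n0 where n0: "U \<alpha> n0 T0 \<subseteq> W" by (elim exE)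
      define G where "G i = (if \<G> = {} then topspace (tau \<alpha>) else from_nat_into \<G> i)" for i
      have Gp: "openin (tau \<alpha>) (G i) \<and> tau \<alpha> closure_of (G i) = topspace (tau \<alpha>)" for i
      proof (cases "\<G> = {}")
        case True thus ?thesis unfolding G_def by simp
      next
        case False
        hence "G i = from_nat_into \<G> i" unfolding G_def by simp
        hence "G i \<in> \<G>" using from_nat_into[OF False] by simp
        moreover have "\<forall>G\<in>\<G>. openin (tau \<alpha>) G \<and> tau \<alpha> closure_of G = topspace (tau \<alpha>)"
          using H by (elim conjE)
        ultimately show ?thesis by blast
      qed
      have Gall: "\<exists>i. X = G i" if XG: "X \<in> \<G>" for X
      proof -
        have ne: "\<G> \<noteq> {}" using XG by blast
        have "countable \<G>" using H by (elim conjE)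
        then obtain i where "from_nat_into \<G> i = X" using from_nat_into_surj[OF _ XG] by blast
        thus ?thesis unfolding G_def using ne by auto
      qed
      define P where "P i p q \<longleftrightarrow> fst q \<in> A \<alpha> \<and> snd p < snd q \<and>
          U \<alpha> (snd q) (fst q) \<subseteq> U \<alpha> (snd p) (fst p) \<inter> G i \<and> wit (fst p) (snd p) (fst q) (snd q)"
        for i and p q :: "nat list set \<times> nat"
      have stp: "\<exists>q. P i p q" if pA: "fst p \<in> A \<alpha>" for i p
      proof -
        obtain T' n' where "T' \<in> A \<alpha> \<and> snd p < n' \<and> U \<alpha> n' T' \<subseteq> U \<alpha> (snd p) (fst p) \<inter> G i \<and> wit (fst p) (snd p) T' n'"
          using step[OF pA, of "G i" "snd p"] Gp[of i] by blast
        hence "P i p (T', n')" unfolding P_def by simp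
        thus ?thesis by blast
      qed
      define st where "st = rec_nat (T0, n0) (\<lambda>i p. SOME q. P i p q)"
      have st0: "st 0 = (T0, n0)" unfolding st_def by simp
      have stS: "st (Suc i) = (SOME q. P i (st i) q)" for i unfolding st_def by simp
      have stA: "fst (st i) \<in> A \<alpha>" for i
      proof (induction i)
        case 0 thus ?case using st0 T0A by simp
      next
        case (Suc i)
        have "P i (st i) (st (Suc i))" unfolding stS by (rule someI_ex[OF stp[OF Suc]])
        thus ?case unfolding P_def by blast
      qed
      have stP: "P i (st i) (st (Suc i))" for i
        unfolding stS by (rule someI_ex[OF stp[OF stA]])
      obtain T where T: "\<forall>i. T \<in> U \<alpha> (snd (st i)) (fst (st i))"
      proof -
        have "\<exists>T. \<forall>i. T \<in> U \<alpha> ((\<lambda>i. snd (st i)) i) ((\<lambda>i. fst (st i)) i)"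
        proof (rule limit)
          show "fst (st i) \<in> A \<alpha>" for i by (rule stA)
          show "snd (st i) < snd (st (Suc i))" for i using stP[of i] unfolding P_def by blast
          show "U \<alpha> (snd (st (Suc i))) (fst (st (Suc i))) \<subseteq> U \<alpha> (snd (st i)) (fst (st i))" for i
            using stP[of i] unfolding P_def by blast
          show "wit (fst (st i)) (snd (st i)) (fst (st (Suc i))) (snd (st (Suc i)))" for i
            using stP[of i] unfolding P_def by blast
        qed
        thus ?thesis using that by blast
      qed
      have "T \<in> G i" for i
        using T stP[of i] unfolding P_def by blast
      hence "T \<in> \<Inter>\<G>" using Gall by blast
      moreover have "T \<in> W" using T[rule_format, of 0] st0 n0 by simp blast
      ultimately show "\<exists>y. y \<in> \<Inter>\<G> \<and> y \<in> W" by blast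
    qed
  qed
qed

end

theorem lemma5p2:
  assumes "\<alpha> \<in> Field omega1"
  shows "Baire_space (tau \<alpha>)
       \<and> (ord_less (wo_rel.minim omega1 (Field omega1)) \<alpha> \<longrightarrow>
            (\<forall>T\<in>topspace (tau \<alpha>). \<not> openin (tau \<alpha>) {T}))
       \<and> (\<forall>B. B \<subseteq> A \<alpha> \<and> B \<in> borel_sets Tr_top \<longrightarrow> B \<in> borel_sets (tau \<alpha>))"
proof -
  have 1: "Baire_space (tau \<alpha>)" by (rule part1)
  have 2: "ord_less (wo_rel.minim omega1 (Field omega1)) \<alpha> \<longrightarrow>
            (\<forall>T\<in>topspace (tau \<alpha>). \<not> openin (tau \<alpha>) {T})"
    using part2 by blast
  have 3: "\<forall>B. B \<subseteq> A \<alpha> \<and> B \<in> borel_sets Tr_top \<longrightarrow> B \<in> borel_sets (tau \<alpha>)"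
    using part3 by blast
  show ?thesis using 1 2 3 by blast
qed

end
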